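(* Let $m\ge2$, $G=CK(2m-1)$, and let $B$ be a blocker for the simple Hamiltonian paths of $G$ whose $m$ edges are parallel (or equal) to the boundary edges $[0,1],\dots,[m-1,m]$, one per direction. Let $[\alpha,\alpha+1]$ and $[m-\delta-1,m-\delta]$ be the first and last edges of $\langle0,1,\dots,m\rangle$ belonging to $B$. Let $[i,j],[k,l]\in B$ with $\alpha<i<k<m-\delta$ and $j,l\notin\{\alpha,\alpha+1,\dots,m-\delta\}$. Then: (1) the edges $[i,j]$ and $[k,l]$ do not cross, i.e., the points $i,k,l,j$ appear in this order on the boundary of the convex hull of $V(G)$; (2) $k-i$ is smaller than the distance between $l$ and $j$.
   Context: $CK(2m-1)$ is the complete convex geometric graph on $2m-1$ points in convex position, labelled clockwise $0,\dots,2m-2$ (elements of $\mathbb{Z}_{2m-1}$), with all segments as edges; boundary edges are $[i,i+1]$. The direction of $[i,j]$ is $i+j\pmod{2m-1}$; edges are parallel if they have the same direction. The distance between vertices $x,y$ is $\min(|x-y|,(2m-1)-|x-y|)$. A simple Hamiltonian path (SHP) is a path through all vertices whose edges pairwise do not cross; a blocker for SHPs is an edge set of smallest possible size sharing an edge with every SHP. *)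

theory Defs
  imports Main
begin

text \<open>Vertices of CK(n) are 0,...,n-1 (clockwise); edges are 2-element sets.\<close>

definition cedges :: "nat \<Rightarrow> nat set set" where
  "cedges n = {{a, b} | a b. a < n \<and> b < n \<and> a \<noteq> b}"

definition edir :: "nat \<Rightarrow> nat set \<Rightarrow> nat" where
  "edir n e = (\<Sum>x\<in>e. x) mod n"

definition between :: "nat \<Rightarrow> nat \<Rightarrow> nat \<Rightarrow> bool" where
  "between a b x = (min a b < x \<and> x < max a b)"

text \<open>Segments [a,b] and [c,d] between points in convex position cross
  iff their endpoints are distinct and interleave.\<close>
definition crosses :: "nat \<Rightarrow> nat \<Rightarrow> nat \<Rightarrow> nat \<Rightarrow> bool" where
  "crosses a b c d = (distinct [a, b, c, d] \<and> (between a b c \<noteq> between a b d))"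

definition is_SHP :: "nat \<Rightarrow> nat list \<Rightarrow> bool" where
  "is_SHP n ps = (distinct ps \<and> set ps = {0..<n} \<and>
     (\<forall>a b. a < b \<and> b + 1 < length ps \<longrightarrow>
        \<not> crosses (ps ! a) (ps ! (a + 1)) (ps ! b) (ps ! (b + 1))))"

definition path_edges :: "nat list \<Rightarrow> nat set set" where
  "path_edges ps = {{ps ! a, ps ! (a + 1)} | a. a + 1 < length ps}"

definition meets_all_SHP :: "nat \<Rightarrow> nat set set \<Rightarrow> bool" where
  "meets_all_SHP n B = (\<forall>ps. is_SHP n ps \<longrightarrow> B \<inter> path_edges ps \<noteq> {})"

definition is_blocker :: "nat \<Rightarrow> nat set set \<Rightarrow> bool" where
  "is_blocker n B = (B \<subseteq> cedges n \<and> meets_all_SHP n B \<and>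
     (\<forall>B'. B' \<subseteq> cedges n \<and> meets_all_SHP n B' \<longrightarrow> card B \<le> card B'))"

definition cdist :: "nat \<Rightarrow> nat \<Rightarrow> nat \<Rightarrow> nat" where
  "cdist n x y = (let d = (if x \<le> y then y - x else x - y) in min d (n - d))"

end

theory Submission
  imports Defs
begin


definition ibetw :: "int \<Rightarrow> int \<Rightarrow> int \<Rightarrow> bool" where
  "ibetw a b x = (min a b < x \<and> x < max a b)"

lemma cross_nat_int:
  fixes x y c d :: nat
  shows "crosses x y c d \<longleftrightarrow> distinct [int x, int y, int c, int d] \<and> (ibetw (int x) (int y) (int c) \<noteq> ibetw (int x) (int y) (int d))"
  unfolding crosses_def between_def ibetw_def by auto

lemma cross_shift_lemma:
  fixes x y c d r :: int and n :: int
  assumes "0 \<le> r" "r < n"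
    "r \<le> x" "x < r + n" "r \<le> y" "y < r + n" "r \<le> c" "c < r + n" "r \<le> d" "d < r + n"
  shows "(distinct [x mod n, y mod n, c mod n, d mod n] \<and> (ibetw (x mod n) (y mod n) (c mod n) \<noteq> ibetw (x mod n) (y mod n) (d mod n)))
     \<longleftrightarrow> (distinct [x,y,c,d] \<and> (ibetw x y c \<noteq> ibetw x y d))"
proof -
  have m: "\<And>z. r \<le> z \<Longrightarrow> z < r + n \<Longrightarrow> z mod n = (if z < n then z else z - n)"
  proof -
    fix z assume z: "r \<le> z" "z < r + n"
    show "z mod n = (if z < n then z else z - n)"
    proof (cases "z < n")
      case True thus ?thesis using z assms(1) by simp
    next
      case False
      hence "z mod n = (z - n) mod n" by (simp add: mod_diff_right_eq[symmetric])
      also have "\<dots> = z - n" using False z assms by (intro mod_pos_pos_trivial) auto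
      finally show ?thesis using False by simp
    qed
  qed
  define X where "X = x mod n"
  define Y where "Y = y mod n"
  define C where "C = c mod n"
  define D where "D = d mod n"
  have hx: "(x < n \<longrightarrow> X = x) \<and> (\<not> x < n \<longrightarrow> X = x - n)" using m[OF assms(3,4)] X_def by simp
  have hy: "(y < n \<longrightarrow> Y = y) \<and> (\<not> y < n \<longrightarrow> Y = y - n)" using m[OF assms(5,6)] Y_def by simp
  have hc: "(c < n \<longrightarrow> C = c) \<and> (\<not> c < n \<longrightarrow> C = c - n)" using m[OF assms(7,8)] C_def by simp
  have hd: "(d < n \<longrightarrow> D = d) \<and> (\<not> d < n \<longrightarrow> D = d - n)" using m[OF assms(9,10)] D_def by simp
  have ib: "\<And>a b z. ibetw a b z = ((a < z \<and> z < b) \<or> (b < z \<and> z < a))" unfolding ibetw_def by auto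
  show ?thesis unfolding X_def[symmetric] Y_def[symmetric] C_def[symmetric] D_def[symmetric] ib distinct.simps set_simps insert_iff empty_iff
    using hx hy hc hd assms by smt
qed




definition res :: "nat \<Rightarrow> int \<Rightarrow> nat" where
  "res n z = nat (z mod int n)"

lemma cross_window:
  fixes x y c d L :: int and n :: nat
  assumes n: "n > 0"
    and "L \<le> x" "x < L + int n" "L \<le> y" "y < L + int n" "L \<le> c" "c < L + int n" "L \<le> d" "d < L + int n"
  shows "crosses (res n x) (res n y) (res n c) (res n d) \<longleftrightarrow> distinct [x,y,c,d] \<and> (ibetw x y c \<noteq> ibetw x y d)"
proof -
  define r where "r = L mod int n"
  define K where "K = L - r"
  have r0: "0 \<le> r" "r < int n" using n unfolding r_def by auto
  have Kd: "K mod int n = 0" unfolding K_def r_def by (simp add: mod_diff_left_eq[symmetric])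
  have md: "\<And>z. z mod int n = (z - K) mod int n"
  proof -
    fix z
    have "(z - K) mod int n = (z - K mod int n) mod int n" by (rule mod_diff_right_eq[symmetric])
    thus "z mod int n = (z - K) mod int n" using Kd by simp
  qed
  have nn: "\<And>z. 0 \<le> z mod int n" using n by simp
  have inr1: "\<And>z. L \<le> z \<Longrightarrow> r \<le> z - K" unfolding K_def by simp
  have inr2: "\<And>z. z < L + int n \<Longrightarrow> z - K < r + int n" unfolding K_def by simp
  have sh: "(distinct [x - K, y - K, c - K, d - K] \<and> (ibetw (x - K) (y - K) (c - K) \<noteq> ibetw (x - K) (y - K) (d - K)))
      \<longleftrightarrow> (distinct [x,y,c,d] \<and> (ibetw x y c \<noteq> ibetw x y d))"
    unfolding ibetw_def by auto
  have "crosses (res n x) (res n y) (res n c) (res n d) \<longleftrightarrow>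
     (distinct [x mod int n, y mod int n, c mod int n, d mod int n] \<and> (ibetw (x mod int n) (y mod int n) (c mod int n) \<noteq> ibetw (x mod int n) (y mod int n) (d mod int n)))"
    unfolding cross_nat_int res_def using nn by simp
  also have "\<dots> \<longleftrightarrow> (distinct [(x-K) mod int n, (y-K) mod int n, (c-K) mod int n, (d-K) mod int n] \<and> (ibetw ((x-K) mod int n) ((y-K) mod int n) ((c-K) mod int n) \<noteq> ibetw ((x-K) mod int n) ((y-K) mod int n) ((d-K) mod int n)))"
    using md[of x] md[of y] md[of c] md[of d] by (simp only:)
  also have "\<dots> \<longleftrightarrow> (distinct [x - K, y - K, c - K, d - K] \<and> (ibetw (x - K) (y - K) (c - K) \<noteq> ibetw (x - K) (y - K) (d - K)))"
    using cross_shift_lemma[OF r0 inr1[OF assms(2)] inr2[OF assms(3)] inr1[OF assms(4)] inr2[OF assms(5)] inr1[OF assms(6)] inr2[OF assms(7)] inr1[OF assms(8)] inr2[OF assms(9)]] .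
  also have "\<dots> \<longleftrightarrow> (distinct [x,y,c,d] \<and> (ibetw x y c \<noteq> ibetw x y d))" using sh .
  finally show ?thesis .
qed




lemma res_inj:
  fixes x y L :: int and n :: nat
  assumes "L \<le> x" "x < L + int n" "L \<le> y" "y < L + int n" "res n x = res n y"
  shows "x = y"
proof -
  have n: "n > 0" using assms by linarith
  have "x mod int n = y mod int n" using assms(5) n unfolding res_def
    by (metis int_nat_eq mod_int_pos_iff of_nat_0_less_iff)
  hence "int n dvd x - y" by (simp add: mod_eq_dvd_iff)
  then obtain q where q: "x - y = int n * q" by (auto elim: dvdE)
  have "q = 0"
  proof (rule ccontr)
    assume "q \<noteq> 0"
    hence "\<bar>int n * q\<bar> \<ge> int n" using n by (simp add: abs_mult)
    thus False using q assms by linarith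
  qed
  thus ?thesis using q by simp
qed

lemma res_lt: "n > 0 \<Longrightarrow> res n z < n"
  unfolding res_def by (simp add: nat_less_iff)

lemma IG_props:
  fixes f lo hi :: "nat \<Rightarrow> int" and n :: nat
  assumes base: "f 0 = lo 0" "hi 0 = lo 0"
    and step: "\<And>r. Suc r < n \<Longrightarrow> (f (Suc r) = lo r - 1 \<and> lo (Suc r) = lo r - 1 \<and> hi (Suc r) = hi r) \<or> (f (Suc r) = hi r + 1 \<and> hi (Suc r) = hi r + 1 \<and> lo (Suc r) = lo r)"
  shows "r < n \<Longrightarrow> f ` {..r} = {lo r..hi r} \<and> hi r - lo r = int r \<and> (f r = lo r \<or> f r = hi r)"
proof (induction r)
  case 0
  then show ?case using base by auto
next
  case (Suc r)
  hence IH: "f ` {..r} = {lo r..hi r}" "hi r - lo r = int r" by auto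
  have e: "{..Suc r} = insert (Suc r) {..r}" by auto
  from step[OF Suc.prems] show ?case
  proof
    assume h: "f (Suc r) = lo r - 1 \<and> lo (Suc r) = lo r - 1 \<and> hi (Suc r) = hi r"
    have "f ` {..Suc r} = insert (lo r - 1) {lo r..hi r}" using e IH h by simp
    also have "\<dots> = {lo r - 1..hi r}" using IH by auto
    finally show ?case using h IH by simp
  next
    assume h: "f (Suc r) = hi r + 1 \<and> hi (Suc r) = hi r + 1 \<and> lo (Suc r) = lo r"
    have "f ` {..Suc r} = insert (hi r + 1) {lo r..hi r}" using e IH h by simp
    also have "\<dots> = {lo r..hi r + 1}" using IH by auto
    finally show ?case using h IH by simp
  qed
qed

lemma IG_SHP:
  fixes f lo hi :: "nat \<Rightarrow> int" and n :: nat
  assumes n: "n > 0"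
    and base: "f 0 = lo 0" "hi 0 = lo 0"
    and step: "\<And>r. Suc r < n \<Longrightarrow> (f (Suc r) = lo r - 1 \<and> lo (Suc r) = lo r - 1 \<and> hi (Suc r) = hi r) \<or> (f (Suc r) = hi r + 1 \<and> hi (Suc r) = hi r + 1 \<and> lo (Suc r) = lo r)"
  shows "is_SHP n (map (\<lambda>r. res n (f r)) [0..<n])"
proof -
  note P = IG_props[of f lo hi n, OF base step]
  define L where "L = lo (n - 1)"
  have PN: "f ` {..n-1} = {L..L + int n - 1}" using P[of "n-1"] n unfolding L_def by auto
  have win: "\<And>r. r < n \<Longrightarrow> L \<le> f r \<and> f r < L + int n"
  proof -
    fix r assume "r < n"
    hence "f r \<in> f ` {..n-1}" by auto
    thus "L \<le> f r \<and> f r < L + int n" using PN by auto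
  qed
  have newpt: "\<And>q r. q < r \<Longrightarrow> r < n \<Longrightarrow> f r < lo q \<or> f r > hi q"
  proof -
    fix q r assume qr: "q < r" "r < n"
    show "f r < lo q \<or> f r > hi q" using qr
    proof (induction r)
      case 0 thus ?case by simp
    next
      case (Suc r)
      have Pr: "f ` {..r} = {lo r..hi r}" using P[of r] Suc.prems by auto
      have sub: "{lo q..hi q} \<subseteq> {lo r..hi r}"
      proof -
        have "f ` {..q} \<subseteq> f ` {..r}" using Suc.prems by auto
        thus ?thesis using P[of q] Pr Suc.prems by auto
      qed
      have "f (Suc r) < lo r \<or> f (Suc r) > hi r" using step[of r] Suc.prems by auto
      moreover have "lo q \<le> hi q" using P[of q] Suc.prems by auto
      ultimately show ?case using sub by auto
    qed
  qed
  have finj: "\<And>q r. q < n \<Longrightarrow> r < n \<Longrightarrow> f q = f r \<Longrightarrow> q = r"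
  proof -
    fix q r assume h: "q < n" "r < n" "f q = f r"
    have inq: "\<And>q. q < n \<Longrightarrow> lo q \<le> f q \<and> f q \<le> hi q" using P by fastforce
    show "q = r"
    proof (rule ccontr)
      assume "q \<noteq> r"
      hence "q < r \<or> r < q" by arith
      thus False using newpt[of q r] newpt[of r q] inq[of q] inq[of r] h by auto
    qed
  qed
  have resinj: "\<And>q r. q < n \<Longrightarrow> r < n \<Longrightarrow> res n (f q) = res n (f r) \<Longrightarrow> q = r"
  proof -
    fix q r assume h: "q < n" "r < n" "res n (f q) = res n (f r)"
    have "f q = f r" using res_inj[of L "f q" n "f r"] win[OF h(1)] win[OF h(2)] h(3) by blast
    thus "q = r" using finj h by blast
  qed
  have dist: "distinct (map (\<lambda>r. res n (f r)) [0..<n])"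
    unfolding distinct_map using resinj by (auto simp: inj_on_def)
  have sub: "set (map (\<lambda>r. res n (f r)) [0..<n]) \<subseteq> {0..<n}" using res_lt[OF n] by auto
  have seteq: "set (map (\<lambda>r. res n (f r)) [0..<n]) = {0..<n}"
  proof (rule card_subset_eq[OF _ sub])
    show "finite {0..<n}" by simp
    show "card (set (map (\<lambda>r. res n (f r)) [0..<n])) = card {0..<n}"
      using distinct_card[OF dist] by simp
  qed
  have nc: "\<And>a b. a < b \<and> b + 1 < n \<longrightarrow> \<not> crosses (res n (f a)) (res n (f (a+1))) (res n (f b)) (res n (f (b+1)))"
  proof (intro impI)
    fix a b assume ab: "a < b \<and> b + 1 < n"
    have Pb: "f ` {..b} = {lo b..hi b}" "f b = lo b \<or> f b = hi b" using P[of b] ab by auto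
    have xa: "lo b \<le> f a \<and> f a \<le> hi b" using Pb(1) ab by (metis atLeastAtMost_iff atMost_iff image_eqI less_imp_le)
    have xa1: "lo b \<le> f (a+1) \<and> f (a+1) \<le> hi b" using Pb(1) ab
      by (metis Suc_eq_plus1 Suc_leI atLeastAtMost_iff atMost_iff image_eqI)
    have d: "f (b+1) < lo b \<or> f (b+1) > hi b" using newpt[of b "b+1"] ab by simp
    have "\<not> ibetw (f a) (f (a+1)) (f b)" using xa xa1 Pb(2) unfolding ibetw_def by auto
    moreover have "\<not> ibetw (f a) (f (a+1)) (f (b+1))" using xa xa1 d unfolding ibetw_def by auto
    ultimately show "\<not> crosses (res n (f a)) (res n (f (a+1))) (res n (f b)) (res n (f (b+1)))"
      using cross_window[OF n, of L "f a" "f (a+1)" "f b" "f (b+1)"] win ab by auto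
  qed
  show ?thesis unfolding is_SHP_def
    using dist seteq nc by (simp add: nth_map_upt)
qed





definition GN1 :: "int \<Rightarrow> int \<Rightarrow> nat" where "GN1 a b = nat (b - a + 1)"
definition GN2 :: "int \<Rightarrow> int \<Rightarrow> nat" where "GN2 b p = nat (p - b)"

definition Gf :: "int \<Rightarrow> int \<Rightarrow> int \<Rightarrow> nat \<Rightarrow> int" where
  "Gf a b p r = (if r < GN1 a b then (if even (GN1 a b - 1 - r) then b - int ((GN1 a b - 1 - r) div 2) else a + int ((GN1 a b - 1 - r) div 2))
    else if r < GN1 a b + GN2 b p then b + int (r - GN1 a b + 1)
    else (if even (r - GN1 a b - GN2 b p) then a - 1 - int ((r - GN1 a b - GN2 b p) div 2) else p + 1 + int ((r - GN1 a b - GN2 b p) div 2)))"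

definition Glo :: "int \<Rightarrow> int \<Rightarrow> int \<Rightarrow> nat \<Rightarrow> int" where
  "Glo a b p r = (if r < GN1 a b then a + int ((GN1 a b - 1 - r) div 2)
    else if r < GN1 a b + GN2 b p then a
    else a - int ((r - GN1 a b - GN2 b p + 2) div 2))"

definition Ghi :: "int \<Rightarrow> int \<Rightarrow> int \<Rightarrow> nat \<Rightarrow> int" where
  "Ghi a b p r = (if r < GN1 a b then b - int ((GN1 a b - r) div 2)
    else if r < GN1 a b + GN2 b p then b + int (r - GN1 a b + 1)
    else p + int ((r - GN1 a b - GN2 b p + 1) div 2))"

lemma G_param:
  assumes "a \<le> b" "b \<le> p"
  shows "b = a + int (GN1 a b) - 1" "p = b + int (GN2 b p)" "GN1 a b \<ge> 1"
  using assms unfolding GN1_def GN2_def by auto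

lemma G_base:
  assumes "a \<le> b" "b \<le> p"
  shows "Gf a b p 0 = Glo a b p 0" "Ghi a b p 0 = Glo a b p 0"
proof -
  obtain N1 N2 where N: "GN1 a b = N1" "GN2 b p = N2" by blast
  have e: "b = a + int N1 - 1" "p = b + int N2" "N1 \<ge> 1" using G_param[OF assms] N by auto
  show "Gf a b p 0 = Glo a b p 0" unfolding Gf_def Glo_def N using e by (simp; (presburger)?)
  show "Ghi a b p 0 = Glo a b p 0" unfolding Ghi_def Glo_def N using e by (simp; (presburger)?)
qed

lemma par_facts:
  fixes q :: nat
  shows "even q \<Longrightarrow> q \<ge> 1 \<Longrightarrow> (q - 1) div 2 = q div 2 - 1 \<and> odd (q - 1) \<and> (q + 1) div 2 = q div 2 \<and> q div 2 \<ge> 1"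
    and "odd q \<Longrightarrow> (q - 1) div 2 = q div 2 \<and> even (q - 1) \<and> (q + 1) div 2 = q div 2 + 1"
    and "even q \<Longrightarrow> (q + 2) div 2 = q div 2 + 1 \<and> odd (q + 1) \<and> (q + 1 + 1) div 2 = q div 2 + 1 \<and> (q + 1) div 2 = q div 2"
    and "odd q \<Longrightarrow> (q + 2) div 2 = q div 2 + 1 \<and> even (q + 1) \<and> (q + 1 + 1) div 2 = q div 2 + 1 \<and> (q + 1) div 2 = q div 2 + 1 \<and> (q + 1 + 2) div 2 = q div 2 + 2"
  by presburger+

lemma G_step:
  assumes "a \<le> b" "b \<le> p"
  shows "(Gf a b p (Suc r) = Glo a b p r - 1 \<and> Glo a b p (Suc r) = Glo a b p r - 1 \<and> Ghi a b p (Suc r) = Ghi a b p r) \<or>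
         (Gf a b p (Suc r) = Ghi a b p r + 1 \<and> Ghi a b p (Suc r) = Ghi a b p r + 1 \<and> Glo a b p (Suc r) = Glo a b p r)"
proof -
  obtain N1 N2 where N: "GN1 a b = N1" "GN2 b p = N2" by blast
  have e: "b = a + int N1 - 1" "p = b + int N2" "N1 \<ge> 1" using G_param[OF assms] N by auto
  consider (z) "Suc r < N1" | (zw) "Suc r = N1" | (w) "N1 < Suc r" "Suc r < N1 + N2" | (wg) "N1 < Suc r" "Suc r = N1 + N2" | (g) "N1 + N2 < Suc r"
    by linarith
  thus ?thesis
  proof cases
    case z
    define q where "q = N1 - 1 - r"
    have q: "q \<ge> 1" "N1 - 1 - Suc r = q - 1" "N1 - Suc r = q" "N1 - r = q + 1" using z unfolding q_def by auto
    have lt: "r < N1" "Suc r < N1" using z by auto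
    show ?thesis
    proof (cases "even q")
      case True
      note pf = par_facts(1)[OF True q(1)]
      show ?thesis unfolding Gf_def Glo_def Ghi_def N using lt q pf True q_def[symmetric] by simp
    next
      case False
      note pf = par_facts(2)[OF False]
      show ?thesis unfolding Gf_def Glo_def Ghi_def N using lt q pf False q_def[symmetric] by simp
    qed
  next
    case zw
    have r: "r = N1 - 1" "N1 - 1 - r = 0" "N1 - r = 1" "Suc r - N1 = 0" using zw by auto
    show ?thesis
    proof (cases "N2 = 0")
      case True
      thus ?thesis unfolding Gf_def Glo_def Ghi_def N using zw r e by simp
    next
      case False
      thus ?thesis unfolding Gf_def Glo_def Ghi_def N using zw r e by simp
    qed
  next
    case w
    have r: "\<not> r < N1" "r < N1 + N2" "\<not> Suc r < N1" "Suc r < N1 + N2" "Suc r - N1 + 1 = r - N1 + 1 + 1" using w by auto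
    show ?thesis unfolding Gf_def Glo_def Ghi_def N using r by simp
  next
    case wg
    have r: "\<not> r < N1" "r < N1 + N2" "\<not> Suc r < N1" "\<not> Suc r < N1 + N2" "Suc r - N1 - N2 = 0" "r - N1 + 1 = N2" using wg by auto
    show ?thesis unfolding Gf_def Glo_def Ghi_def N using r e by simp
  next
    case g
    define q where "q = r - N1 - N2"
    have r: "\<not> r < N1" "\<not> r < N1 + N2" "\<not> Suc r < N1" "\<not> Suc r < N1 + N2" "Suc r - N1 - N2 = q + 1" "r - N1 - N2 = q" "Suc r - N1 - N2 + 2 = q + 1 + 2"
      "Suc r - N1 - N2 + 1 = q + 1 + 1"
      using g unfolding q_def by auto
    show ?thesis
    proof (cases "even q")
      case True
      note pf = par_facts(3)[OF True]
      show ?thesis unfolding Gf_def Glo_def Ghi_def N using r pf True by simp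
    next
      case False
      note pf = par_facts(4)[OF False]
      show ?thesis unfolding Gf_def Glo_def Ghi_def N using r pf False by simp
    qed
  qed
qed

lemma G_edge:
  fixes a b p :: int and r :: nat
  assumes "a \<le> b" "b \<le> p"
  defines "x \<equiv> Gf a b p r" and "y \<equiv> Gf a b p (Suc r)"
  shows "(a \<le> x \<and> x \<le> b \<and> a \<le> y \<and> y \<le> b \<and> (x + y = a + b \<or> x + y = a + b - 1)) \<or>
    (b \<le> x \<and> x < p \<and> y = x + 1) \<or>
    ((x \<le> a - 1 \<and> p \<le> y \<or> y \<le> a - 1 \<and> p \<le> x) \<and> (x + y = a + p - 1 \<or> x + y = a + p))"
proof -
  obtain N1 N2 where N: "GN1 a b = N1" "GN2 b p = N2" by blast
  have e: "b = a + int N1 - 1" "p = b + int N2" "N1 \<ge> 1" using G_param[OF assms(1,2)] N by auto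
  consider (z) "Suc r < N1" | (zw) "Suc r = N1" | (w) "N1 < Suc r" "Suc r < N1 + N2" | (wg) "N1 < Suc r" "Suc r = N1 + N2" | (g) "N1 + N2 < Suc r"
    by linarith
  thus ?thesis
  proof cases
    case z
    define q where "q = N1 - 1 - r"
    have q: "q \<ge> 1" "N1 - 1 - Suc r = q - 1" "q \<le> N1 - 1" using z unfolding q_def by auto
    have lt: "r < N1" "Suc r < N1" using z by auto
    show ?thesis
    proof (cases "even q")
      case True
      note pf = par_facts(1)[OF True q(1)]
      have hq: "q div 2 \<le> N1 - 1" using q by linarith
      have xv: "x = b - int (q div 2)" unfolding x_def Gf_def N using lt True q_def[symmetric] by simp
      have yv: "y = a + int (q div 2) - 1" unfolding y_def Gf_def N using lt q pf True q_def[symmetric] by simp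
      have "a \<le> x \<and> x \<le> b \<and> a \<le> y \<and> y \<le> b \<and> x + y = a + b - 1" unfolding xv yv using hq pf e by linarith
      thus ?thesis by blast
    next
      case False
      note pf = par_facts(2)[OF False]
      have hq: "q div 2 \<le> N1 - 1" using q by linarith
      have hq2: "q div 2 < q" using q by simp
      have xv: "x = a + int (q div 2)" unfolding x_def Gf_def N using lt False q_def[symmetric] by simp
      have yv: "y = b - int (q div 2)" unfolding y_def Gf_def N using lt q pf False q_def[symmetric] by simp
      have "a \<le> x \<and> x \<le> b \<and> a \<le> y \<and> y \<le> b \<and> x + y = a + b" unfolding xv yv using hq hq2 q pf e by linarith
      thus ?thesis by blast
    qed
  next
    case zw
    have r: "r = N1 - 1" "N1 - 1 - r = 0" "Suc r - N1 = 0" using zw by auto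
    show ?thesis
    proof (cases "N2 = 0")
      case True
      thus ?thesis unfolding x_def y_def Gf_def N using zw r e by simp
    next
      case False
      thus ?thesis unfolding x_def y_def Gf_def N using zw r e by simp
    qed
  next
    case w
    have r: "\<not> r < N1" "r < N1 + N2" "\<not> Suc r < N1" "Suc r < N1 + N2" "Suc r - N1 + 1 = r - N1 + 1 + 1" "r - N1 + 1 < N2" using w by auto
    show ?thesis unfolding x_def y_def Gf_def N using r e by simp
  next
    case wg
    have r: "\<not> r < N1" "r < N1 + N2" "\<not> Suc r < N1" "\<not> Suc r < N1 + N2" "Suc r - N1 - N2 = 0" "r - N1 + 1 = N2" using wg by auto
    show ?thesis unfolding x_def y_def Gf_def N using r e by simp
  next
    case g
    define q where "q = r - N1 - N2"
    have r: "\<not> r < N1" "\<not> r < N1 + N2" "\<not> Suc r < N1" "\<not> Suc r < N1 + N2" "Suc r - N1 - N2 = q + 1" "r - N1 - N2 = q"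
      using g unfolding q_def by auto
    show ?thesis
    proof (cases "even q")
      case True
      note pf = par_facts(3)[OF True]
      show ?thesis unfolding x_def y_def Gf_def N using r pf True e by simp
    next
      case False
      note pf = par_facts(4)[OF False]
      show ?thesis unfolding x_def y_def Gf_def N using r pf False e by simp
    qed
  qed
qed

lemma G_contra:
  fixes a b p s :: int and n :: nat and B :: "nat set set"
  assumes meets: "meets_all_SHP n B" and n: "n > 0" and ab: "a \<le> b" "b \<le> p"
    and s: "s = 1 \<or> s = -1"
    and H1: "\<And>x y. a \<le> x \<Longrightarrow> x \<le> b \<Longrightarrow> a \<le> y \<Longrightarrow> y \<le> b \<Longrightarrow> (x + y = a + b \<or> x + y = a + b - 1) \<Longrightarrow> {res n (s*x), res n (s*y)} \<notin> B"
    and H2: "\<And>x. b \<le> x \<Longrightarrow> x < p \<Longrightarrow> {res n (s*x), res n (s*(x+1))} \<notin> B"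
    and H3: "\<And>x y. x \<le> a - 1 \<Longrightarrow> p \<le> y \<Longrightarrow> y - x < int n \<Longrightarrow> (x + y = a + p - 1 \<or> x + y = a + p) \<Longrightarrow> {res n (s*x), res n (s*y)} \<notin> B"
  shows False
proof -
  define f where "f = (\<lambda>r. s * Gf a b p r)"
  define lo where "lo = (\<lambda>r. if s = 1 then Glo a b p r else - Ghi a b p r)"
  define hi where "hi = (\<lambda>r. if s = 1 then Ghi a b p r else - Glo a b p r)"
  have base: "f 0 = lo 0" "hi 0 = lo 0" using G_base[OF ab] s unfolding f_def lo_def hi_def by auto
  have step: "\<And>r. Suc r < n \<Longrightarrow> (f (Suc r) = lo r - 1 \<and> lo (Suc r) = lo r - 1 \<and> hi (Suc r) = hi r) \<or> (f (Suc r) = hi r + 1 \<and> hi (Suc r) = hi r + 1 \<and> lo (Suc r) = lo r)"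
  proof -
    fix r :: nat
    from s show "(f (Suc r) = lo r - 1 \<and> lo (Suc r) = lo r - 1 \<and> hi (Suc r) = hi r) \<or> (f (Suc r) = hi r + 1 \<and> hi (Suc r) = hi r + 1 \<and> lo (Suc r) = lo r)"
    proof
      assume "s = 1" thus ?thesis using G_step[OF ab, of r] unfolding f_def lo_def hi_def by simp
    next
      assume s1: "s = -1"
      from G_step[OF ab, of r] show ?thesis
      proof
        assume h: "Gf a b p (Suc r) = Glo a b p r - 1 \<and> Glo a b p (Suc r) = Glo a b p r - 1 \<and> Ghi a b p (Suc r) = Ghi a b p r"
        show ?thesis apply (rule disjI2) using h s1 unfolding f_def lo_def hi_def by simp
      next
        assume h: "Gf a b p (Suc r) = Ghi a b p r + 1 \<and> Ghi a b p (Suc r) = Ghi a b p r + 1 \<and> Glo a b p (Suc r) = Glo a b p r"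
        show ?thesis apply (rule disjI1) using h s1 unfolding f_def lo_def hi_def by simp
      qed
    qed
  qed
  have shp: "is_SHP n (map (\<lambda>r. res n (f r)) [0..<n])" by (rule IG_SHP[OF n base step])
  then obtain e where e: "e \<in> B" "e \<in> path_edges (map (\<lambda>r. res n (f r)) [0..<n])"
    using meets unfolding meets_all_SHP_def by blast
  then obtain r where r: "r + 1 < n" "e = {res n (f r), res n (f (Suc r))}"
    unfolding path_edges_def by auto
  note P0 = IG_props[of "\<lambda>r. Gf a b p r" "Glo a b p" "Ghi a b p" n, OF G_base[OF ab] G_step[OF ab]]
  have PN: "(\<lambda>r. Gf a b p r) ` {..n-1} = {Glo a b p (n-1)..Ghi a b p (n-1)}" "Ghi a b p (n-1) - Glo a b p (n-1) = int (n - 1)"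
    using P0[of "n-1"] n by auto
  have inw: "\<And>q. q < n \<Longrightarrow> Glo a b p (n-1) \<le> Gf a b p q \<and> Gf a b p q \<le> Ghi a b p (n-1)"
  proof -
    fix q assume "q < n"
    hence "Gf a b p q \<in> (\<lambda>r. Gf a b p r) ` {..n-1}" by auto
    thus "Glo a b p (n-1) \<le> Gf a b p q \<and> Gf a b p q \<le> Ghi a b p (n-1)" using PN(1) by auto
  qed
  define x where "x = Gf a b p r"
  define y where "y = Gf a b p (Suc r)"
  have dxy: "\<bar>x - y\<bar> < int n" using inw[of r] inw[of "Suc r"] r PN(2) n unfolding x_def y_def by auto
  have dxy1: "x - y < int n" "y - x < int n" using dxy by auto
  have eB: "{res n (s*x), res n (s*y)} \<in> B" using e r unfolding f_def x_def y_def by simp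
  from G_edge[OF ab, of r] have "(a \<le> x \<and> x \<le> b \<and> a \<le> y \<and> y \<le> b \<and> (x + y = a + b \<or> x + y = a + b - 1)) \<or>
    (b \<le> x \<and> x < p \<and> y = x + 1) \<or>
    ((x \<le> a - 1 \<and> p \<le> y \<or> y \<le> a - 1 \<and> p \<le> x) \<and> (x + y = a + p - 1 \<or> x + y = a + p))"
    unfolding x_def y_def .
  thus False
  proof (elim disjE conjE)
    assume "a \<le> x" "x \<le> b" "a \<le> y" "y \<le> b" "x + y = a + b"
    thus False using H1[of x y] eB by auto
  next
    assume "a \<le> x" "x \<le> b" "a \<le> y" "y \<le> b" "x + y = a + b - 1"
    thus False using H1[of x y] eB by auto
  next
    assume "b \<le> x" "x < p" "y = x + 1"
    thus False using H2[of x] eB by auto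
  next
    assume h: "x \<le> a - 1" "p \<le> y" "x + y = a + p - 1"
    thus False using H3[of x y] eB dxy1 by auto
  next
    assume h: "x \<le> a - 1" "p \<le> y" "x + y = a + p"
    thus False using H3[of x y] eB dxy1 by auto
  next
    assume h: "y \<le> a - 1" "p \<le> x" "x + y = a + p - 1"
    thus False using H3[of y x] eB dxy1 by (auto simp: insert_commute)
  next
    assume h: "y \<le> a - 1" "p \<le> x" "x + y = a + p"
    thus False using H3[of y x] eB dxy1 by (auto simp: insert_commute)
  qed
qed

lemma G_left_contra:
  fixes a b q :: int and n :: nat and B :: "nat set set"
  assumes meets: "meets_all_SHP n B" and n: "n > 0" and ab: "a \<le> b" "q \<le> a"
    and H1: "\<And>x y. a \<le> x \<Longrightarrow> x \<le> b \<Longrightarrow> a \<le> y \<Longrightarrow> y \<le> b \<Longrightarrow> (x + y = a + b \<or> x + y = a + b + 1) \<Longrightarrow> {res n x, res n y} \<notin> B"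
    and H2: "\<And>x. q \<le> x \<Longrightarrow> x < a \<Longrightarrow> {res n x, res n (x+1)} \<notin> B"
    and H3: "\<And>x y. b + 1 \<le> x \<Longrightarrow> y \<le> q \<Longrightarrow> x - y < int n \<Longrightarrow> (x + y = b + q \<or> x + y = b + q + 1) \<Longrightarrow> {res n x, res n y} \<notin> B"
  shows False
proof (rule G_contra[OF meets n, of "-b" "-a" "-q" "-1"])
  show "-b \<le> -a" "-a \<le> -q" using ab by auto
  show "(-1::int) = 1 \<or> (-1::int) = -1" by simp
next
  fix x y :: int
  assume h: "- b \<le> x" "x \<le> - a" "- b \<le> y" "y \<le> - a" "x + y = - b + - a \<or> x + y = - b + - a - 1"
  show "{res n (- 1 * x), res n (- 1 * y)} \<notin> B" using H1[of "-x" "-y"] h by auto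
next
  fix x :: int
  assume h: "- a \<le> x" "x < - q"
  have "{res n (-x-1), res n (-x-1+1)} \<notin> B" using H2[of "-x-1"] h by auto
  thus "{res n (- 1 * x), res n (- 1 * (x + 1))} \<notin> B" by (simp add: insert_commute)
next
  fix x y :: int
  assume h: "x \<le> - b - 1" "- q \<le> y" "y - x < int n" "x + y = - b + - q - 1 \<or> x + y = - b + - q"
  show "{res n (- 1 * x), res n (- 1 * y)} \<notin> B" using H3[of "-x" "-y"] h by auto
qed




lemma res_nat: "u < n \<Longrightarrow> res n (int u) = u"
  unfolding res_def by simp

lemma res_plus_n: "res n (z + int n) = res n z"
  unfolding res_def by simp

lemma res_ne:
  fixes z v L :: int
  assumes "L \<le> z" "z < L + int n" "L \<le> v" "v < L + int n" "z \<noteq> v"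
  shows "res n z \<noteq> res n v"
  using res_inj[of L z n v] assms by blast

lemma res_add:
  assumes "n > 0"
  shows "(res n x + res n y) mod n = nat ((x + y) mod int n)"
proof -
  have "int ((res n x + res n y) mod n) = (int (res n x) + int (res n y)) mod int n"
    by (simp add: zmod_int)
  also have "\<dots> = (x mod int n + y mod int n) mod int n" unfolding res_def using assms by simp
  also have "\<dots> = (x + y) mod int n" by (simp add: mod_add_eq)
  finally show ?thesis by simp
qed

lemma mod_lo: "0 \<le> z \<Longrightarrow> z < int n \<Longrightarrow> z mod int n = z"
  by simp

lemma mod_hi: "int n \<le> z \<Longrightarrow> z < 2 * int n \<Longrightarrow> z mod int n = z - int n"
proof -
  assume h: "int n \<le> z" "z < 2 * int n"
  have "z mod int n = (z - int n) mod int n" by (simp add: mod_diff_right_eq[symmetric])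
  also have "\<dots> = z - int n" using h by (intro mod_pos_pos_trivial) auto
  finally show ?thesis .
qed

lemma res_int: "n > 0 \<Longrightarrow> int (res n V) = V mod int n"
  unfolding res_def by simp

lemma dir_int: "n > 0 \<Longrightarrow> (int u + V) mod int n = int ((u + res n V) mod n)"
proof -
  assume n: "n > 0"
  have "(int u + V) mod int n = (int u + V mod int n) mod int n" by (simp add: mod_add_right_eq)
  also have "\<dots> = (int u + int (res n V)) mod int n" using res_int[OF n] by simp
  also have "\<dots> = int ((u + res n V) mod n)" by (simp add: zmod_int)
  finally show ?thesis .
qed

locale bsetup =
  fixes m n \<alpha> \<beta> :: nat and B :: "nat set set"
  assumes m2: "m \<ge> 2" and nm: "n = 2 * m - 1"
    and blk: "is_blocker n B" and cardB: "card B = m"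
    and dirs: "\<forall>t<m. \<exists>!e. e \<in> B \<and> edir n e = (2 * t + 1) mod n"
    and am: "\<alpha> < m" and aB: "{\<alpha>, \<alpha> + 1} \<in> B" and below: "\<forall>t<\<alpha>. {t, t + 1} \<notin> B"
    and bm: "\<beta> < m" and bB: "{\<beta>, \<beta> + 1} \<in> B" and above: "\<forall>t. \<beta> < t \<and> t < m \<longrightarrow> {t, t + 1} \<notin> B"
    and ab: "\<alpha> < \<beta>"
begin

lemma n3: "n \<ge> 3" using m2 nm by simp
lemma npos: "n > 0" using n3 by simp
lemma meets: "meets_all_SHP n B" using blk unfolding is_blocker_def by simp
lemma Bsub: "B \<subseteq> cedges n" using blk unfolding is_blocker_def by simp

lemma Bmem: "{u, v} \<in> B \<Longrightarrow> u \<noteq> v \<and> u < n \<and> v < n"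
proof -
  assume h: "{u, v} \<in> B"
  then obtain a b where ab: "{u, v} = {a, b}" "a < n" "b < n" "a \<noteq> b"
    using Bsub unfolding cedges_def by blast
  thus ?thesis by (auto simp: doubleton_eq_iff)
qed

lemma single_notin: "{u, u} \<notin> B"
  using Bmem by blast

lemma edir2: "u \<noteq> v \<Longrightarrow> edir n {u, v} = (u + v) mod n"
  unfolding edir_def by simp

lemma dir_inj: "t < m \<Longrightarrow> t' < m \<Longrightarrow> (2 * t + 1) mod n = (2 * t' + 1) mod n \<Longrightarrow> t = t'"
proof -
  assume h: "t < m" "t' < m" "(2 * t + 1) mod n = (2 * t' + 1) mod n"
  have md: "\<And>s. s < m \<Longrightarrow> (2 * s + 1) mod n = (if s = m - 1 then 0 else 2 * s + 1)"
  proof -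
    fix s assume s: "s < m"
    show "(2 * s + 1) mod n = (if s = m - 1 then 0 else 2 * s + 1)"
    proof (cases "s = m - 1")
      case True
      hence "2 * s + 1 = n" using nm m2 by simp
      thus ?thesis using True by simp
    next
      case False
      hence "2 * s + 1 < n" using nm m2 s by simp
      thus ?thesis using False by simp
    qed
  qed
  show "t = t'" using h md[OF h(1)] md[OF h(2)] by (auto split: if_splits)
qed

lemma Bdir: "e \<in> B \<Longrightarrow> \<exists>t<m. edir n e = (2 * t + 1) mod n"
proof -
  assume eB: "e \<in> B"
  define E where "E = (\<lambda>t. THE e. e \<in> B \<and> edir n e = (2 * t + 1) mod n)"
  have EP: "\<And>t. t < m \<Longrightarrow> E t \<in> B \<and> edir n (E t) = (2 * t + 1) mod n"
  proof -
    fix t assume t: "t < m"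
    have u: "\<exists>!e. e \<in> B \<and> edir n e = (2 * t + 1) mod n" using dirs t by blast
    show "E t \<in> B \<and> edir n (E t) = (2 * t + 1) mod n" unfolding E_def by (rule theI'[OF u])
  qed
  have inj: "inj_on E {..<m}"
  proof (rule inj_onI)
    fix t t' assume h: "t \<in> {..<m}" "t' \<in> {..<m}" "E t = E t'"
    hence "(2 * t + 1) mod n = (2 * t' + 1) mod n" using EP[of t] EP[of t'] by auto
    thus "t = t'" using dir_inj h by auto
  qed
  have sub: "E ` {..<m} \<subseteq> B" using EP by auto
  have finB: "finite B" using cardB m2 by (intro card_ge_0_finite) simp
  have "card (E ` {..<m}) = card B" using card_image[OF inj] cardB by simp
  hence "E ` {..<m} = B" using card_subset_eq[OF finB sub] by simp
  then obtain t where "t < m" "e = E t" using eB by auto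
  thus ?thesis using EP by blast
qed

lemma Buniq: "e \<in> B \<Longrightarrow> e' \<in> B \<Longrightarrow> edir n e = edir n e' \<Longrightarrow> e = e'"
proof -
  assume h: "e \<in> B" "e' \<in> B" "edir n e = edir n e'"
  obtain t where t: "t < m" "edir n e = (2 * t + 1) mod n" using Bdir[OF h(1)] by blast
  have u: "\<exists>!e. e \<in> B \<and> edir n e = (2 * t + 1) mod n" using dirs t(1) by blast
  show "e = e'" using u h t by auto
qed

lemma Dform: "t < m \<Longrightarrow> (2 * t + 1) mod n = 0 \<or> (odd ((2 * t + 1) mod n) \<and> (2 * t + 1) mod n < n)"
proof (cases "t = m - 1")
  case True
  hence "2 * t + 1 = n" using nm m2 by simp
  thus ?thesis by simp
next
  case False
  assume "t < m"
  hence "2 * t + 1 < n" using nm m2 False by simp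
  thus ?thesis by simp
qed

lemma Bpar: "{u, v} \<in> B \<Longrightarrow> (u + v) mod n = 0 \<or> odd ((u + v) mod n)"
proof -
  assume h: "{u, v} \<in> B"
  have uv: "u \<noteq> v" using Bmem[OF h] by simp
  obtain t where t: "t < m" "edir n {u, v} = (2 * t + 1) mod n" using Bdir[OF h] by blast
  have "(u + v) mod n = (2 * t + 1) mod n" using t(2) edir2[OF uv] by simp
  thus ?thesis using Dform[OF t(1)] by auto
qed

lemma even_safe:
  fixes x y :: int and h :: nat
  assumes "(x + y) mod int n = 2 * int h" "0 < h"
  shows "{res n x, res n y} \<notin> B"
proof
  assume eB: "{res n x, res n y} \<in> B"
  have ne: "res n x \<noteq> res n y" using Bmem[OF eB] by simp
  have "edir n {res n x, res n y} = 2 * h"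
    using edir2[OF ne] res_add[OF npos, of x y] assms(1) by simp
  moreover obtain t where "t < m" "edir n {res n x, res n y} = (2 * t + 1) mod n" using Bdir[OF eB] by blast
  ultimately have e2: "2 * h = (2 * t + 1) mod n" and tm: "t < m" by auto
  from Dform[OF tm] show False
  proof
    assume "(2 * t + 1) mod n = 0" thus False using e2 assms(2) by simp
  next
    assume "odd ((2 * t + 1) mod n) \<and> (2 * t + 1) mod n < n"
    hence "odd (2 * h)" using e2 by simp
    thus False by simp
  qed
qed

lemma class_hit:
  fixes x y :: int and u v :: nat
  assumes eB: "{res n x, res n y} \<in> B" and uv: "{u, v} \<in> B"
    and s: "(x + y) mod int n = (int u + int v) mod int n"
  shows "u = res n x \<or> u = res n y"
proof -
  have ne: "res n x \<noteq> res n y" using Bmem[OF eB] by simp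
  have ne2: "u \<noteq> v" using Bmem[OF uv] by simp
  have "edir n {res n x, res n y} = nat ((x + y) mod int n)"
    using edir2[OF ne] res_add[OF npos] by simp
  also have "\<dots> = nat ((int u + int v) mod int n)" using s by simp
  also have "\<dots> = (u + v) mod n"
  proof -
    have "int ((u + v) mod n) = (int u + int v) mod int n" by (simp add: zmod_int)
    thus ?thesis by (metis nat_int)
  qed
  also have "\<dots> = edir n {u, v}" using edir2[OF ne2] by simp
  finally have "{res n x, res n y} = {u, v}" using Buniq[OF eB uv] by simp
  thus ?thesis by (auto simp: doubleton_eq_iff)
qed

lemma bsafe:
  fixes x :: int
  assumes "int \<beta> + 1 \<le> x" "x \<le> int \<alpha> + int n - 1"
  shows "{res n x, res n (x + 1)} \<notin> B"
proof (cases "x < int n")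
  case True
  define t where "t = nat x"
  have xt: "x = int t" using assms(1) unfolding t_def by simp
  have rt: "res n x = t" using True res_nat[of t n] xt by simp
  show ?thesis
  proof (cases "t < m")
    case True
    have t1: "t + 1 < n" using True nm m2 by simp
    have e1: "x + 1 = int (t + 1)" using xt by simp
    have "res n (x + 1) = t + 1" unfolding e1 by (rule res_nat[OF t1])
    moreover have "\<beta> < t" using assms(1) xt by simp
    ultimately show ?thesis using above True rt by simp
  next
    case False
    show ?thesis
    proof (cases "t + 1 < n")
      case True
      have e1: "x + 1 = int (t + 1)" using xt by simp
      have r1: "res n (x + 1) = t + 1" unfolding e1 by (rule res_nat[OF True])
      have "(x + (x + 1)) mod int n = 2 * int (t + 1 - m)"
      proof -
        have "x + (x + 1) = 2 * int t + 1" using xt by simp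
        moreover have "int n \<le> 2 * int t + 1" "2 * int t + 1 < 2 * int n" using False True nm m2 by auto
        ultimately show ?thesis using mod_hi[of n "2 * int t + 1"] nm m2 False by auto
      qed
      moreover have "0 < t + 1 - m" using False by simp
      ultimately show ?thesis using even_safe by blast
    next
      case False
      hence tn: "t = n - 1" using \<open>x < int n\<close> xt by simp
      have "(x + (x + 1)) mod int n = 2 * int (m - 1)"
      proof -
        have "x + (x + 1) = int n + (int n - 1)" using xt tn npos by simp
        hence "(x + (x + 1)) mod int n = (int n + (int n - 1)) mod int n" by (simp only:)
        also have "\<dots> = (int n - 1) mod int n" by (rule mod_add_self1)
        also have "\<dots> = int n - 1" using npos by (intro mod_pos_pos_trivial) auto
        finally show ?thesis using nm m2 by simp
      qed
      moreover have "0 < m - 1" using m2 by simp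
      ultimately show ?thesis using even_safe by blast
    qed
  qed
next
  case False
  define t where "t = nat (x - int n)"
  have xt: "x = int t + int n" using False unfolding t_def by simp
  have tl: "t < \<alpha>" using assms(2) xt by simp
  have t1: "t + 1 < n" using tl am nm by simp
  have t0: "t < n" using t1 by simp
  have r0: "res n x = t" unfolding xt res_plus_n by (rule res_nat[OF t0])
  have e1: "x + 1 = int (t + 1) + int n" using xt by simp
  have r1: "res n (x + 1) = t + 1" unfolding e1 res_plus_n by (rule res_nat[OF t1])
  show ?thesis using below tl r0 r1 by simp
qed


lemma class_hit2:
  fixes x y V :: int and u :: nat
  assumes eB: "{res n x, res n y} \<in> B" and uv: "{u, res n V} \<in> B"
    and s: "(x + y) mod int n = (int u + V) mod int n"
  shows "u = res n x \<or> u = res n y"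
proof (rule class_hit[OF eB uv])
  show "(x + y) mod int n = (int u + int (res n V)) mod int n"
    using s dir_int[OF npos, of u V] by (simp add: zmod_int)
qed

lemma par_int:
  assumes "{u, res n V} \<in> B"
  shows "(int u + V) mod int n = 0 \<or> odd ((int u + V) mod int n)"
  using Bpar[OF assms] dir_int[OF npos, of u V] by auto

lemma n_ge: "int n \<ge> 2 * int \<beta> + 1" using bm nm by simp
lemma a1n: "\<alpha> + 1 < n" using ab bm nm by simp
lemma a2n: "2 * int \<alpha> + 2 < int n" using ab bm nm by simp
lemma bn: "\<beta> < n" using bm nm by simp

lemma lemA:
  fixes k l :: nat and L :: int
  assumes kl: "{k, l} \<in> B" and k: "\<alpha> < k" "k \<le> \<beta>"
    and L: "int \<beta> + 2 \<le> L" "L \<le> int \<alpha> + int n - 1" and rl: "res n L = l"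
  shows "int k + L \<le> 2 * int \<alpha> + int n"
proof (rule ccontr)
  assume "\<not> ?thesis"
  hence S: "int k + L \<ge> 2 * int \<alpha> + int n + 1" by simp
  have k2: "int k \<ge> int \<alpha> + 2" using S L by linarith
  have nb: "int n \<ge> 2 * int \<beta> + 1" by (rule n_ge)
  have klB: "{k, res n L} \<in> B" using kl rl by simp
  have aB': "{\<alpha> + 1, res n (int \<alpha>)} \<in> B" using aB res_nat[of \<alpha> n] am nm by (simp add: insert_commute)
  define b where "b = 2 * int \<alpha> + 2 + int n - int k"
  show False
  proof (rule G_contra[OF meets npos, of "int k" b "L + 1" 1])
    show "int k \<le> b" "b \<le> L + 1" unfolding b_def using S k nb by auto
    show "(1::int) = 1 \<or> (1::int) = -1" by simp
  next
    fix x y :: int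
    assume h: "int k \<le> x" "x \<le> b" "int k \<le> y" "y \<le> b" "x + y = int k + b \<or> x + y = int k + b - 1"
    show "{res n (1 * x), res n (1 * y)} \<notin> B"
    proof
      assume eB: "{res n (1 * x), res n (1 * y)} \<in> B"
      hence eB': "{res n x, res n y} \<in> B" by simp
      from h(5) show False
      proof
        assume "x + y = int k + b"
        hence "x + y = int n + 2 * int (\<alpha> + 1)" unfolding b_def by simp
        moreover have "2 * int (\<alpha> + 1) < int n" using ab bm nm by simp
        ultimately have "(x + y) mod int n = 2 * int (\<alpha> + 1)" using mod_hi[of n "x + y"] by simp
        thus False using even_safe[of x y "\<alpha> + 1"] eB' by simp
      next
        assume "x + y = int k + b - 1"
        hence "x + y = int n + (int (\<alpha> + 1) + int \<alpha>)" unfolding b_def by simp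
        hence "(x + y) mod int n = (int (\<alpha> + 1) + int \<alpha>) mod int n" by simp
        from class_hit2[OF eB' aB' this] have "\<alpha> + 1 = res n x \<or> \<alpha> + 1 = res n y" .
        moreover have "res n (int (\<alpha> + 1)) = \<alpha> + 1" by (rule res_nat[OF a1n])
        moreover have "res n x \<noteq> res n (int (\<alpha> + 1))"
          by (rule res_ne[of "int \<alpha> + 1"]) (use h k2 S L b_def in auto)
        moreover have "res n y \<noteq> res n (int (\<alpha> + 1))"
          by (rule res_ne[of "int \<alpha> + 1"]) (use h k2 S L b_def in auto)
        ultimately show False by auto
      qed
    qed
  next
    fix x :: int
    assume h: "b \<le> x" "x < L + 1"
    have "{res n x, res n (x + 1)} \<notin> B" by (rule bsafe) (use h b_def k nb L in auto)
    thus "{res n (1 * x), res n (1 * (x + 1))} \<notin> B" by simp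
  next
    fix x y :: int
    assume h: "x \<le> int k - 1" "L + 1 \<le> y" "y - x < int n" "x + y = int k + (L + 1) - 1 \<or> x + y = int k + (L + 1)"
    show "{res n (1 * x), res n (1 * y)} \<notin> B"
    proof
      assume eB: "{res n (1 * x), res n (1 * y)} \<in> B"
      hence eB': "{res n x, res n y} \<in> B" by simp
      have Sn: "int k + L < 2 * int n" using k L nb by linarith
      have Smod: "(int k + L) mod int n = int k + L - int n" using mod_hi[of n "int k + L"] S Sn by simp
      from h(4) show False
      proof
        assume "x + y = int k + (L + 1) - 1"
        hence "(x + y) mod int n = (int k + L) mod int n" by simp
        have kn: "k < n" using k bn by simp
        from class_hit2[OF eB' klB \<open>(x + y) mod int n = (int k + L) mod int n\<close>] have "k = res n x \<or> k = res n y" .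
        moreover have "res n (int k) = k" by (rule res_nat[OF kn])
        moreover have "res n x \<noteq> res n (int k)"
          by (rule res_ne[of "int k - int n + 1"]) (use h k L in auto)
        moreover have "res n (int k + int n) = k" unfolding res_plus_n by (rule res_nat[OF kn])
        moreover have "res n y \<noteq> res n (int k + int n)"
          by (rule res_ne[of "int k + 1"]) (use h k L in auto)
        ultimately show False by auto
      next
        assume "x + y = int k + (L + 1)"
        have p: "(int k + L) mod int n = 0 \<or> odd ((int k + L) mod int n)" by (rule par_int[OF klB])
        hence "odd (int k + L - int n)" using Smod S by auto
        then obtain h3 where h3: "int k + L - int n = 2 * h3 + 1" by (rule oddE)
        define h2 where "h2 = h3 + 1"
        have h2: "int k + L + 1 - int n = 2 * h2" using h3 unfolding h2_def by simp
        have "(x + y) mod int n = int k + L + 1 - int n"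
          using mod_hi[of n "x + y"] \<open>x + y = int k + (L + 1)\<close> S Sn k L nb by simp
        hence "(x + y) mod int n = 2 * int (nat h2)" using h2 S by simp
        moreover have "0 < nat h2" using h2 S by simp
        ultimately show False using even_safe eB' by blast
      qed
    qed
  qed
qed


lemma lemB:
  fixes i j :: nat and J :: int
  assumes ij: "{i, j} \<in> B" and i: "\<alpha> < i" "i \<le> \<beta>"
    and J: "int \<beta> + 2 \<le> J" "J \<le> int \<alpha> + int n - 1" and rj: "res n J = j"
  shows "int i + J \<ge> 2 * int \<beta> + 2"
proof (rule ccontr)
  assume "\<not> ?thesis"
  hence S: "int i + J \<le> 2 * int \<beta> + 1" by simp
  have i1: "int i \<le> int \<beta> - 1" using S J by linarith
  have nb: "int n \<ge> 2 * int \<beta> + 1" by (rule n_ge)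
  have ijB: "{i, res n J} \<in> B" using ij rj by simp
  have bB': "{\<beta>, res n (int \<beta> + 1)} \<in> B"
  proof -
    have "\<beta> + 1 < n" using bm nm m2 by simp
    hence "res n (int (\<beta> + 1)) = \<beta> + 1" by (rule res_nat)
    moreover have "int \<beta> + 1 = int (\<beta> + 1)" by simp
    ultimately have "res n (int \<beta> + 1) = \<beta> + 1" by metis
    thus ?thesis using bB by simp
  qed
  have b1: "\<beta> \<ge> 1" using ab by simp
  have resb: "res n (int \<beta> + int n) = \<beta>" unfolding res_plus_n by (rule res_nat[OF bn])
  have iN: "i < n" using i bn by simp
  have resi: "res n (int i + int n) = i" unfolding res_plus_n by (rule res_nat[OF iN])
  have resi2: "res n (int i + 2 * int n) = i"
    using res_plus_n[of n "int i + int n"] resi by (simp add: algebra_simps)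
  show False
  proof (rule G_left_contra[OF meets npos, of "2 * int \<beta> - int i" "int i + int n" "J - 1"])
    show "2 * int \<beta> - int i \<le> int i + int n" "J - 1 \<le> 2 * int \<beta> - int i" using S nb i by auto
  next
    fix x y :: int
    assume h: "2 * int \<beta> - int i \<le> x" "x \<le> int i + int n" "2 * int \<beta> - int i \<le> y" "y \<le> int i + int n"
      "x + y = 2 * int \<beta> - int i + (int i + int n) \<or> x + y = 2 * int \<beta> - int i + (int i + int n) + 1"
    show "{res n x, res n y} \<notin> B"
    proof
      assume eB': "{res n x, res n y} \<in> B"
      from h(5) show False
      proof
        assume "x + y = 2 * int \<beta> - int i + (int i + int n)"
        hence e: "x + y = int n + 2 * int \<beta>" by simp
        have "(x + y) mod int n = 2 * int \<beta>" using mod_hi[of n "x + y"] e nb by simp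
        thus False using even_safe[of x y \<beta>] eB' b1 by simp
      next
        assume "x + y = 2 * int \<beta> - int i + (int i + int n) + 1"
        hence "x + y = int n + (int \<beta> + (int \<beta> + 1))" by simp
        hence "(x + y) mod int n = (int \<beta> + (int \<beta> + 1)) mod int n" by simp
        from class_hit2[OF eB' bB' this] have "\<beta> = res n x \<or> \<beta> = res n y" .
        moreover have "res n x \<noteq> res n (int \<beta> + int n)"
          by (rule res_ne[of "int \<beta> + 1"]) (use h i1 in auto)
        moreover have "res n y \<noteq> res n (int \<beta> + int n)"
          by (rule res_ne[of "int \<beta> + 1"]) (use h i1 in auto)
        ultimately show False using resb by auto
      qed
    qed
  next
    fix x :: int
    assume h: "J - 1 \<le> x" "x < 2 * int \<beta> - int i"
    show "{res n x, res n (x + 1)} \<notin> B" by (rule bsafe) (use h J i nb in auto)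
  next
    fix x y :: int
    assume h: "int i + int n + 1 \<le> x" "y \<le> J - 1" "x - y < int n"
      "x + y = int i + int n + (J - 1) \<or> x + y = int i + int n + (J - 1) + 1"
    show "{res n x, res n y} \<notin> B"
    proof
      assume eB': "{res n x, res n y} \<in> B"
      from h(4) show False
      proof
        assume "x + y = int i + int n + (J - 1) + 1"
        hence "x + y = int n + (int i + J)" by simp
        hence "(x + y) mod int n = (int i + J) mod int n" by simp
        from class_hit2[OF eB' ijB this] have "i = res n x \<or> i = res n y" .
        moreover have "res n x \<noteq> res n (int i + 2 * int n)"
          by (rule res_ne[of "int i + int n + 1"]) (use h J i in auto)
        moreover have "res n y \<noteq> res n (int i + int n)"
          by (rule res_ne[of "int i + 1"]) (use h J i in auto)
        ultimately show False using resi resi2 by auto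
      next
        assume "x + y = int i + int n + (J - 1)"
        hence e: "x + y = int n + (int i + J - 1)" by simp
        have S1: "int i + J \<ge> 3" using i J by simp
        have "(x + y) mod int n = int i + J - 1" using mod_hi[of n "x + y"] e S nb S1 by simp
        moreover have "\<exists>h. int i + J - 1 = 2 * int h \<and> 0 < h"
        proof (cases "int i + J < int n")
          case True
          have "(int i + J) mod int n = int i + J" using True S1 by simp
          hence "odd (int i + J)" using par_int[OF ijB] S1 by auto
          then obtain h3 where h3: "int i + J = 2 * h3 + 1" by (rule oddE)
          hence "int i + J - 1 = 2 * int (nat h3) \<and> 0 < nat h3" using S1 by simp
          thus ?thesis by blast
        next
          case False
          hence "int i + J - 1 = 2 * int (m - 1)" using S nb nm m2 by simp
          thus ?thesis using m2 by (intro exI[of _ "m - 1"]) simp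
        qed
        ultimately obtain h where "(x + y) mod int n = 2 * int h" "0 < h" by auto
        thus False using even_safe eB' by blast
      qed
    qed
  qed
qed


lemma pred_even:
  assumes uB: "{u, res n V} \<in> B" and lo: "3 \<le> int u + V" and hi: "int u + V \<le> int n"
  shows "\<exists>h. 0 < h \<and> int u + V - 1 = 2 * int h"
proof (cases "int u + V < int n")
  case True
  have "(int u + V) mod int n = int u + V" using True lo by simp
  hence "odd (int u + V)" using par_int[OF uB] lo by auto
  then obtain h3 where h3: "int u + V = 2 * h3 + 1" by (rule oddE)
  hence "int u + V - 1 = 2 * int (nat h3) \<and> 0 < nat h3" using lo by simp
  thus ?thesis by blast
next
  case False
  hence "int u + V - 1 = 2 * int (m - 1)" using hi nm m2 by simp
  thus ?thesis using m2 by (intro exI[of _ "m - 1"]) simp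
qed

lemma succ_even:
  assumes uB: "{u, res n V} \<in> B" and lo: "int n < int u + V" and hi: "int u + V < 2 * int n"
  shows "\<exists>h. 0 < h \<and> int u + V + 1 - int n = 2 * int h"
proof -
  have "(int u + V) mod int n = int u + V - int n" using mod_hi[of n "int u + V"] lo hi by simp
  hence "odd (int u + V - int n)" using par_int[OF uB] lo by auto
  then obtain h3 where h3: "int u + V - int n = 2 * h3 + 1" by (rule oddE)
  hence "int u + V + 1 - int n = 2 * int (nat (h3 + 1)) \<and> 0 < nat (h3 + 1)" using lo by simp
  thus ?thesis by blast
qed

lemma order_main:
  fixes i j k l :: nat and J L :: int
  assumes ij: "{i, j} \<in> B" and kl: "{k, l} \<in> B" and ik: "\<alpha> < i" "i < k" "k \<le> \<beta>"
    and J: "int \<beta> + 2 \<le> J" "J \<le> int \<alpha> + int n - 1" "res n J = j"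
    and L: "int \<beta> + 2 \<le> L" "L \<le> int \<alpha> + int n - 1" "res n L = l"
  shows "int k + L < int i + J"
proof -
  have A1: "int i + J \<le> 2 * int \<alpha> + int n" using lemA[OF ij _ _ J] ik by simp
  have A2: "int k + L \<le> 2 * int \<alpha> + int n" using lemA[OF kl _ _ L] ik by simp
  have B1: "int i + J \<ge> 2 * int \<beta> + 2" using lemB[OF ij _ _ J] ik by simp
  have B2: "int k + L \<ge> 2 * int \<beta> + 2" using lemB[OF kl _ _ L] ik by simp
  have nb: "int n \<ge> 2 * int \<beta> + 1" by (rule n_ge)
  have b1: "int \<beta> \<ge> 1" using ab by simp
  have ijB: "{i, res n J} \<in> B" using ij J by simp
  have klB: "{k, res n L} \<in> B" using kl L by simp
  have iN: "i < n" "k < n" using ik bn by auto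
  have resi: "res n (int i) = i" "res n (int i + int n) = i" "res n (int i + 2 * int n) = i"
  proof -
    show r0: "res n (int i) = i" by (rule res_nat[OF iN(1)])
    show r1: "res n (int i + int n) = i" unfolding res_plus_n by (rule r0)
    show "res n (int i + 2 * int n) = i" using res_plus_n[of n "int i + int n"] r1 by (simp add: algebra_simps)
  qed
  have resk: "res n (int k) = k" "res n (int k + int n) = k"
  proof -
    show r0: "res n (int k) = k" by (rule res_nat[OF iN(2)])
    show "res n (int k + int n) = k" unfolding res_plus_n by (rule r0)
  qed
  have neq: "int i + J \<noteq> int k + L"
  proof
    assume e: "int i + J = int k + L"
    have eB: "{res n (int k), res n L} \<in> B" using klB resk by simp
    have "(int k + L) mod int n = (int i + J) mod int n" using e by simp
    from class_hit2[OF eB ijB this] have "i = res n (int k) \<or> i = res n L" .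
    moreover have "res n L \<noteq> res n (int i)" by (rule res_ne[of "int \<alpha> + 1"]) (use ik L in auto)
    ultimately show False using resk resi ik by auto
  qed
  show ?thesis
  proof (rule ccontr)
    assume "\<not> ?thesis"
    hence lt: "int i + J < int k + L" using neq by simp
    show False
    proof (cases "int i + J \<le> int n")
      case S1n: True
      define P where "P = (if int k + L \<le> int n then int k + L - int i - 1 else int k + L - int i)"
      have P1: "P \<ge> J - 1" "P \<le> int \<alpha> + int n - 1" unfolding P_def using lt A2 ik by auto
      show False
      proof (rule G_contra[OF meets npos, of "int i + 1" "J - 1" P 1])
        show "int i + 1 \<le> J - 1" "J - 1 \<le> P" using J ik P1 by auto
        show "(1::int) = 1 \<or> (1::int) = -1" by simp
      next
        fix x y :: int
        assume h: "int i + 1 \<le> x" "x \<le> J - 1" "int i + 1 \<le> y" "y \<le> J - 1" "x + y = int i + 1 + (J - 1) \<or> x + y = int i + 1 + (J - 1) - 1"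
        show "{res n (1 * x), res n (1 * y)} \<notin> B"
        proof
          assume "{res n (1 * x), res n (1 * y)} \<in> B"
          hence eB': "{res n x, res n y} \<in> B" by simp
          from h(5) show False
          proof
            assume "x + y = int i + 1 + (J - 1)"
            hence "(x + y) mod int n = (int i + J) mod int n" by simp
            from class_hit2[OF eB' ijB this] have "i = res n x \<or> i = res n y" .
            moreover have "res n x \<noteq> res n (int i + int n)" by (rule res_ne[of "int i + 1"]) (use h J ik in auto)
            moreover have "res n y \<noteq> res n (int i + int n)" by (rule res_ne[of "int i + 1"]) (use h J ik in auto)
            ultimately show False using resi by auto
          next
            assume e: "x + y = int i + 1 + (J - 1) - 1"
            obtain hh where hh: "0 < hh" "int i + J - 1 = 2 * int hh" using pred_even[OF ijB] B1 S1n b1 by force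
            have "(x + y) mod int n = int i + J - 1" using e S1n B1 by simp
            thus False using even_safe[of x y hh] hh eB' by simp
          qed
        qed
      next
        fix x :: int
        assume h: "J - 1 \<le> x" "x < P"
        have "{res n x, res n (x + 1)} \<notin> B" by (rule bsafe) (use h J P1 in auto)
        thus "{res n (1 * x), res n (1 * (x + 1))} \<notin> B" by simp
      next
        fix x y :: int
        assume h: "x \<le> int i + 1 - 1" "P \<le> y" "y - x < int n" "x + y = int i + 1 + P - 1 \<or> x + y = int i + 1 + P"
        show "{res n (1 * x), res n (1 * y)} \<notin> B"
        proof
          assume "{res n (1 * x), res n (1 * y)} \<in> B"
          hence eB': "{res n x, res n y} \<in> B" by simp
          have hitk: "(x + y) mod int n = (int k + L) mod int n \<Longrightarrow> False"
          proof -
            assume "(x + y) mod int n = (int k + L) mod int n"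
            from class_hit2[OF eB' klB this] have "k = res n x \<or> k = res n y" .
            moreover have "res n x \<noteq> res n (int k)" by (rule res_ne[of "int k - int n + 1"]) (use h J ik P1 in auto)
            moreover have "res n y \<noteq> res n (int k + int n)" by (rule res_ne[of "int k + 1"]) (use h J ik P1 in auto)
            ultimately show False using resk by auto
          qed
          show False
          proof (cases "int k + L \<le> int n")
            case True
            hence Pd: "P = int k + L - int i - 1" unfolding P_def by simp
            from h(4) show False
            proof
              assume "x + y = int i + 1 + P - 1"
              hence e: "x + y = int k + L - 1" using Pd by simp
              obtain hh where hh: "0 < hh" "int k + L - 1 = 2 * int hh" using pred_even[OF klB] B2 True b1 by force
              have "(x + y) mod int n = int k + L - 1" using e True B2 by simp
              thus False using even_safe[of x y hh] hh eB' by simp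
            next
              assume "x + y = int i + 1 + P"
              hence "x + y = int k + L" using Pd by simp
              thus False using hitk by simp
            qed
          next
            case False
            hence Pd: "P = int k + L - int i" unfolding P_def by simp
            from h(4) show False
            proof
              assume "x + y = int i + 1 + P - 1"
              hence "x + y = int k + L" using Pd by simp
              thus False using hitk by simp
            next
              assume "x + y = int i + 1 + P"
              hence e: "x + y = int k + L + 1" using Pd by simp
              obtain hh where hh: "0 < hh" "int k + L + 1 - int n = 2 * int hh" using succ_even[OF klB] False A2 a2n by force
              have "(x + y) mod int n = int k + L + 1 - int n" using e False A2 a2n mod_hi[of n "x + y"] by simp
              thus False using even_safe[of x y hh] hh eB' by simp
            qed
          qed
        qed
      qed
    next
      case S1n: False
      show False
      proof (rule G_left_contra[OF meets npos, of "L + 1" "int k + int n - 1" "int i + J - int k + 1"])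
        show "L + 1 \<le> int k + int n - 1" "int i + J - int k + 1 \<le> L + 1" using L ik lt by auto
      next
        fix x y :: int
        assume h: "L + 1 \<le> x" "x \<le> int k + int n - 1" "L + 1 \<le> y" "y \<le> int k + int n - 1"
          "x + y = L + 1 + (int k + int n - 1) \<or> x + y = L + 1 + (int k + int n - 1) + 1"
        show "{res n x, res n y} \<notin> B"
        proof
          assume eB': "{res n x, res n y} \<in> B"
          from h(5) show False
          proof
            assume "x + y = L + 1 + (int k + int n - 1)"
            hence "x + y = int n + (int k + L)" by simp
            hence "(x + y) mod int n = (int k + L) mod int n" by simp
            from class_hit2[OF eB' klB this] have "k = res n x \<or> k = res n y" .
            moreover have "res n x \<noteq> res n (int k + int n)" by (rule res_ne[of "int k + 1"]) (use h L ik in auto)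
            moreover have "res n y \<noteq> res n (int k + int n)" by (rule res_ne[of "int k + 1"]) (use h L ik in auto)
            ultimately show False using resk by auto
          next
            assume "x + y = L + 1 + (int k + int n - 1) + 1"
            hence e: "x + y = int n + (int k + L + 1)" by simp
            obtain hh where hh: "0 < hh" "int k + L + 1 - int n = 2 * int hh" using succ_even[OF klB] S1n lt A2 a2n by force
            have "(x + y) mod int n = (int k + L + 1) mod int n" using e by simp
            also have "\<dots> = int k + L + 1 - int n" using mod_hi[of n "int k + L + 1"] S1n lt A2 a2n by simp
            finally show False using even_safe[of x y hh] hh eB' by simp
          qed
        qed
      next
        fix x :: int
        assume h: "int i + J - int k + 1 \<le> x" "x < L + 1"
        show "{res n x, res n (x + 1)} \<notin> B" by (rule bsafe) (use h L ik S1n nb in auto)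
      next
        fix x y :: int
        assume h: "int k + int n - 1 + 1 \<le> x" "y \<le> int i + J - int k + 1" "x - y < int n"
          "x + y = int k + int n - 1 + (int i + J - int k + 1) \<or> x + y = int k + int n - 1 + (int i + J - int k + 1) + 1"
        show "{res n x, res n y} \<notin> B"
        proof
          assume eB': "{res n x, res n y} \<in> B"
          from h(4) show False
          proof
            assume "x + y = int k + int n - 1 + (int i + J - int k + 1)"
            hence "x + y = int n + (int i + J)" by simp
            hence "(x + y) mod int n = (int i + J) mod int n" by simp
            from class_hit2[OF eB' ijB this] have "i = res n x \<or> i = res n y" .
            moreover have "res n x \<noteq> res n (int i + 2 * int n)" by (rule res_ne[of "int i + int n + 1"]) (use h J ik in auto)
            moreover have "res n y \<noteq> res n (int i + int n)" by (rule res_ne[of "int i + 1"]) (use h J ik in auto)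
            ultimately show False using resi by auto
          next
            assume "x + y = int k + int n - 1 + (int i + J - int k + 1) + 1"
            hence e: "x + y = int n + (int i + J + 1)" by simp
            obtain hh where hh: "0 < hh" "int i + J + 1 - int n = 2 * int hh" using succ_even[OF ijB] S1n A1 a2n by force
            have "(x + y) mod int n = (int i + J + 1) mod int n" using e by simp
            also have "\<dots> = int i + J + 1 - int n" using mod_hi[of n "int i + J + 1"] S1n A1 a2n by simp
            finally show False using even_safe[of x y hh] hh eB' by simp
          qed
        qed
      qed
    qed
  qed
qed

end




lemma wrep:
  fixes v n a b :: nat
  assumes "v < n" "v \<notin> {a..b + 1}" "a < b" "2 * b + 1 \<le> n"
  shows "\<exists>V. int b + 2 \<le> V \<and> V \<le> int a + int n - 1 \<and> res n V = v \<and> (V = int v \<or> V = int v + int n) \<and> (V = int v \<longleftrightarrow> v \<ge> b + 2)"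
proof (cases "v \<ge> b + 2")
  case True
  thus ?thesis using assms by (intro exI[of _ "int v"]) (auto simp: res_nat)
next
  case False
  hence "v < a" using assms by auto
  thus ?thesis using assms False
    by (intro exI[of _ "int v + int n"]) (auto simp: res_nat res_plus_n)
qed

lemma modrep:
  fixes v i n :: nat and V :: int
  assumes n: "n > 0" and "v < n" "i < n" "res n V = v" "int i < V" "V < int i + int n"
  shows "(v + n - i) mod n = nat (V - int i)"
proof -
  have "int ((v + n - i) mod n) = int (v + n - i) mod int n" by (simp add: zmod_int)
  also have "int (v + n - i) = int v + int n - int i" using assms by simp
  also have "(int v + int n - int i) mod int n = (int v - int i) mod int n"
  proof -
    have "int v + int n - int i = (int v - int i) + int n" by simp
    thus ?thesis by (simp only: mod_add_self2)
  qed
  also have "\<dots> = (V mod int n - int i) mod int n" using res_int[OF n, of V] assms(4) by simp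
  also have "\<dots> = (V - int i) mod int n" by (simp add: mod_diff_left_eq)
  also have "\<dots> = V - int i" using assms by (intro mod_pos_pos_trivial) auto
  finally show ?thesis by simp
qed

lemma min_nat_int: "d \<le> n \<Longrightarrow> int (min d (n - d)) = min (int d) (int n - int d)"
  by (cases "d \<le> n - d") (auto simp: min_def)

theorem proposition5:
  fixes m n \<alpha> \<beta> i j k l :: nat and B :: "nat set set"
  assumes "m \<ge> 2" and "n = 2 * m - 1"
    and "is_blocker n B"
    and "card B = m"
    and "\<forall>t<m. \<exists>!e. e \<in> B \<and> edir n e = (2 * t + 1) mod n"
    and "\<alpha> < m" and "{\<alpha>, \<alpha> + 1} \<in> B" and "\<forall>t<\<alpha>. {t, t + 1} \<notin> B"
    and "\<beta> < m" and "{\<beta>, \<beta> + 1} \<in> B" and "\<forall>t. \<beta> < t \<and> t < m \<longrightarrow> {t, t + 1} \<notin> B"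
    and "{i, j} \<in> B" and "{k, l} \<in> B"
    and "\<alpha> < i" and "i < k" and "k < \<beta> + 1"
    and "j \<notin> {\<alpha>..\<beta> + 1}" and "l \<notin> {\<alpha>..\<beta> + 1}"
  shows "(\<not> crosses i j k l \<and>
          0 < (k + n - i) mod n \<and> (k + n - i) mod n < (l + n - i) mod n \<and>
          (l + n - i) mod n < (j + n - i) mod n)
       \<and> k - i < cdist n l j"
proof -
  have ab: "\<alpha> < \<beta>" using assms(14,15,16) by simp
  interpret bsetup m n \<alpha> \<beta> B
    by (unfold_locales) (use assms ab in auto)
  have ijn: "i < n" "j < n" using Bmem[OF assms(12)] by auto
  have kln: "k < n" "l < n" using Bmem[OF assms(13)] by auto
  have nb2: "2 * \<beta> + 1 \<le> n" using assms(9) assms(2) by simp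
  obtain J where J: "int \<beta> + 2 \<le> J" "J \<le> int \<alpha> + int n - 1" "res n J = j" "J = int j \<or> J = int j + int n" "J = int j \<longleftrightarrow> j \<ge> \<beta> + 2"
    using wrep[OF ijn(2) assms(17) ab nb2] by blast
  obtain L where L: "int \<beta> + 2 \<le> L" "L \<le> int \<alpha> + int n - 1" "res n L = l" "L = int l \<or> L = int l + int n" "L = int l \<longleftrightarrow> l \<ge> \<beta> + 2"
    using wrep[OF kln(2) assms(18) ab nb2] by blast
  have ord: "int k + L < int i + J"
    by (rule order_main[OF assms(12) assms(13) assms(14) assms(15) _ J(1-3) L(1-3)]) (use assms(16) in simp)
  have ik: "int \<alpha> < int i" "int i < int k" "int k \<le> int \<beta>" using assms(14-16) by auto
  have LJ: "L < J" using ord ik by simp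
  have resi: "res n (int i) = i" by (rule res_nat[OF ijn(1)])
  have resk: "res n (int k) = k" by (rule res_nat[OF kln(1)])
  have nc: "\<not> crosses i j k l"
  proof -
    have "crosses (res n (int i)) (res n J) (res n (int k)) (res n L) \<longleftrightarrow> distinct [int i, J, int k, L] \<and> (ibetw (int i) J (int k) \<noteq> ibetw (int i) J L)"
      by (rule cross_window[OF npos, of "int \<alpha> + 1"]) (use ik J L in auto)
    moreover have "ibetw (int i) J (int k)" "ibetw (int i) J L" unfolding ibetw_def using ik J L LJ by auto
    ultimately show ?thesis using resi resk J L by simp
  qed
  have m1: "(k + n - i) mod n = k - i"
  proof -
    have "k + n - i = (k - i) + n" using assms(15) by simp
    hence "(k + n - i) mod n = (k - i) mod n" by simp
    thus ?thesis using kln by simp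
  qed
  have m2': "(l + n - i) mod n = nat (L - int i)"
    by (rule modrep[OF npos kln(2) ijn(1) L(3)]) (use ik L in auto)
  have m3: "(j + n - i) mod n = nat (J - int i)"
    by (rule modrep[OF npos ijn(2) ijn(1) J(3)]) (use ik J in auto)
  have cd: "int (cdist n l j) = min (J - L) (int n - (J - L))"
  proof -
    have cdd: "cdist n l j = min (if l \<le> j then j - l else l - j) (n - (if l \<le> j then j - l else l - j))"
      unfolding cdist_def Let_def by simp
    have "(J = int j \<and> L = int l) \<or> (J = int j + int n \<and> L = int l + int n) \<or> (J = int j + int n \<and> L = int l)"
      using J(4) L(4) LJ L(1) J(2) ijn kln by auto
    thus ?thesis
    proof (elim disjE conjE)
      assume h: "J = int j" "L = int l"
      hence lj: "l < j" using LJ by simp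
      hence "cdist n l j = min (j - l) (n - (j - l))" using cdd by simp
      moreover have "int (min (j - l) (n - (j - l))) = min (int (j - l)) (int n - int (j - l))"
        by (rule min_nat_int) (use ijn in simp)
      moreover have "int (j - l) = J - L" using h lj by simp
      ultimately show ?thesis by simp
    next
      assume h: "J = int j + int n" "L = int l + int n"
      hence lj: "l < j" using LJ by simp
      hence "cdist n l j = min (j - l) (n - (j - l))" using cdd by simp
      moreover have "int (min (j - l) (n - (j - l))) = min (int (j - l)) (int n - int (j - l))"
        by (rule min_nat_int) (use ijn in simp)
      moreover have "int (j - l) = J - L" using h lj by simp
      ultimately show ?thesis by simp
    next
      assume h: "J = int j + int n" "L = int l"
      have "\<not> j \<ge> \<beta> + 2" using J(5) h ijn by auto
      moreover have "l \<ge> \<beta> + 2" using L(5) h by auto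
      ultimately have jl: "j < l" by simp
      hence "cdist n l j = min (l - j) (n - (l - j))" using cdd by simp
      moreover have "int (min (l - j) (n - (l - j))) = min (int (l - j)) (int n - int (l - j))"
        by (rule min_nat_int) (use kln in simp)
      moreover have "int (l - j) = int n - (J - L)" using h jl by simp
      ultimately show ?thesis by (simp add: min.commute)
    qed
  qed
  have c4: "k - i < cdist n l j"
  proof -
    have "int (k - i) < J - L" using ord ik by simp
    moreover have "int (k - i) < int n - (J - L)" using ik J L by simp
    ultimately have "int (k - i) < int (cdist n l j)" using cd by simp
    thus ?thesis by simp
  qed
  show ?thesis
    using nc m1 m2' m3 c4 ik LJ L J by auto
qed


end
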